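(* Consider Q-learning with on-policy learning policies as in the context with constant parameters $\alpha_k\equiv\alpha$, $\epsilon_k\equiv\epsilon$, $\tau_k\equiv\tau$, under the exploration assumption, with $\alpha<1/c_1$ where $c_1=\tfrac12\lambda^{r_b}\mu_{\pi_b,\min}\delta_b(1-\gamma)$ and $\lambda=\min_{0\le n\le k}\min_{s,a}\pi_n(a\mid s)$, $\epsilon\in(0,1]$ and $\tau\in(0,1/(1-\gamma)]$. Then for all $k\ge0$, \[ \mathbb E[\|Q^{\pi_k}-Q^*\|_\infty^2]\le\frac{12\gamma^2}{(1-\gamma)^2}\mathbb E[\|Q_k-Q^*\|_\infty^2]+\frac{12\epsilon^2}{(1-\gamma)^4}+\frac{3\tau^2\log^2(|\mathcal A|)}{(1-\gamma)^2}. \]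
   Context: MDP: finite state set $\mathcal S$, finite action set $\mathcal A$, transition kernel $p(s'\mid s,a)$, reward $\mathcal R$ with $|\mathcal R(s,a)|\le1$, discount $\gamma\in(0,1)$. For a policy $\pi$, $Q^\pi(s,a)=\mathbb E_\pi[\sum_{k\ge0}\gamma^k\mathcal R(S_k,A_k)\mid S_0=s,A_0=a]$ where $A_k\sim\pi(\cdot\mid S_k)$ for $k\ge1$. $Q^*$ is the optimal Q-function. $\|\cdot\|_\infty$ is the max norm. Algorithm: given $\alpha_k>0$, $\epsilon_k\in(0,1]$, $\tau_k>0$, initial $Q_0$ with $\|Q_0\|_\infty\le1/(1-\gamma)$ and state $S_0$, for $k=0,1,\dots$: $\pi_k(a\mid s)=\frac{\epsilon_k}{|\mathcal A|}+(1-\epsilon_k)\frac{\exp(Q_k(s,a)/\tau_k)}{\sum_{a'}\exp(Q_k(s,a')/\tau_k)}$; $A_k\sim\pi_k(\cdot\mid S_k)$, $S_{k+1}\sim p(\cdot\mid S_k,A_k)$; $Q_{k+1}(s,a)=Q_k(s,a)+\alpha_k\mathbb 1_{\{(S_k,A_k)=(s,a)\}}(\mathcal R(S_k,A_k)+\gamma\max_{a'}Q_k(S_{k+1},a')-Q_k(S_k,A_k))$. The policy $\pi_k$ is a (random) policy; $Q^{\pi_k}$ is its Q-function. Exploration assumption: there is a policy $\pi_b$ with $\pi_b(a\mid s)>0$ for all $(s,a)$ whose state chain $P_{\pi_b}(s,s')=\sum_a p(s'\mid s,a)\pi_b(a\mid s)$ is irreducible; $\mu_{\pi_b}$ its stationary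 distribution, $\mu_{\pi_b,\min}=\min_s\mu_{\pi_b}(s)$; $\mathcal P_{\pi_b}=(P_{\pi_b}+I)/2$; $r_b\in\mathbb Z_+$, $\delta_b>0$ satisfy $\min_{s,s'}\mathcal P_{\pi_b}^{r_b}(s,s')\ge\delta_b$. *)

theory Defs
  imports "HOL-Probability.Probability"
begin

text \<open>Finite MDP with states 's and actions 'a (both finite types).
  p s a s' is the transition kernel, R s a the reward, a (stationary Markov)
  policy is pol s a = pol(a | s).\<close>

definition is_policy :: "('s::finite \<Rightarrow> 'a::finite \<Rightarrow> real) \<Rightarrow> bool" where
  "is_policy pol \<longleftrightarrow> (\<forall>s a. 0 \<le> pol s a) \<and> (\<forall>s. (\<Sum>a\<in>UNIV. pol s a) = 1)"

definition is_kernel :: "('s::finite \<Rightarrow> 'a::finite \<Rightarrow> 's \<Rightarrow> real) \<Rightarrow> bool" where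
  "is_kernel p \<longleftrightarrow> (\<forall>s a s'. 0 \<le> p s a s') \<and> (\<forall>s a. (\<Sum>s'\<in>UNIV. p s a s') = 1)"

fun kpow :: "('b::finite \<Rightarrow> 'b \<Rightarrow> real) \<Rightarrow> nat \<Rightarrow> 'b \<Rightarrow> 'b \<Rightarrow> real" where
  "kpow P 0 x y = (if x = y then 1 else 0)"
| "kpow P (Suc n) x y = (\<Sum>z\<in>UNIV. kpow P n x z * P z y)"

definition sa_step :: "('s::finite \<Rightarrow> 'a::finite \<Rightarrow> 's \<Rightarrow> real) \<Rightarrow> ('s \<Rightarrow> 'a \<Rightarrow> real)
    \<Rightarrow> ('s \<times> 'a) \<Rightarrow> ('s \<times> 'a) \<Rightarrow> real" where
  "sa_step p pol x y = p (fst x) (snd x) (fst y) * pol (fst y) (snd y)"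

text \<open>Q^pol(s,a) = E_pi[ sum_k gamma^k R(S_k,A_k) | S_0 = s, A_0 = a ], written out
  with the k-step distribution of the state-action chain.\<close>
definition Qfun :: "('s::finite \<Rightarrow> 'a::finite \<Rightarrow> 's \<Rightarrow> real) \<Rightarrow> ('s \<Rightarrow> 'a \<Rightarrow> real) \<Rightarrow> real
    \<Rightarrow> ('s \<Rightarrow> 'a \<Rightarrow> real) \<Rightarrow> 's \<Rightarrow> 'a \<Rightarrow> real" where
  "Qfun p R \<gamma> pol s a =
     (\<Sum>k. \<gamma> ^ k * (\<Sum>y\<in>UNIV. kpow (sa_step p pol) k (s, a) y * R (fst y) (snd y)))"

definition Qstar :: "('s::finite \<Rightarrow> 'a::finite \<Rightarrow> 's \<Rightarrow> real) \<Rightarrow> ('s \<Rightarrow> 'a \<Rightarrow> real) \<Rightarrow> real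
    \<Rightarrow> 's \<Rightarrow> 'a \<Rightarrow> real" where
  "Qstar p R \<gamma> s a = (SUP pol\<in>{pol. is_policy pol}. Qfun p R \<gamma> pol s a)"

definition supnorm :: "('s::finite \<Rightarrow> 'a::finite \<Rightarrow> real) \<Rightarrow> real" where
  "supnorm f = Max (range (\<lambda>(s, a). \<bar>f s a\<bar>))"

definition softpol :: "real \<Rightarrow> real \<Rightarrow> ('s::finite \<Rightarrow> 'a::finite \<Rightarrow> real) \<Rightarrow> 's \<Rightarrow> 'a \<Rightarrow> real" where
  "softpol \<epsilon> \<tau> Q s a = \<epsilon> / real CARD('a)
     + (1 - \<epsilon>) * exp (Q s a / \<tau>) / (\<Sum>a'\<in>UNIV. exp (Q s a' / \<tau>))"

definition qupdate :: "real \<Rightarrow> ('s::finite \<Rightarrow> 'a::finite \<Rightarrow> real) \<Rightarrow> real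
    \<Rightarrow> ('s \<Rightarrow> 'a \<Rightarrow> real) \<Rightarrow> 's \<Rightarrow> 'a \<Rightarrow> 's \<Rightarrow> ('s \<Rightarrow> 'a \<Rightarrow> real)" where
  "qupdate \<alpha> R \<gamma> Q s a s' = (\<lambda>x y. if (x, y) = (s, a)
      then Q x y + \<alpha> * (R s a + \<gamma> * Max (range (Q s')) - Q s a) else Q x y)"

definition Pstate :: "('s::finite \<Rightarrow> 'a::finite \<Rightarrow> 's \<Rightarrow> real) \<Rightarrow> ('s \<Rightarrow> 'a \<Rightarrow> real) \<Rightarrow> 's \<Rightarrow> 's \<Rightarrow> real" where
  "Pstate p pol s s' = (\<Sum>a\<in>UNIV. p s a s' * pol s a)"

definition histS :: "(nat \<Rightarrow> 'w \<Rightarrow> 's) \<Rightarrow> (nat \<Rightarrow> 'w \<Rightarrow> 'a) \<Rightarrow> nat \<Rightarrow> 'w \<Rightarrow> ('s \<times> 'a) list \<times> 's" where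
  "histS S A n w = (map (\<lambda>i. (S i w, A i w)) [0..<n], S n w)"

definition histA :: "(nat \<Rightarrow> 'w \<Rightarrow> 's) \<Rightarrow> (nat \<Rightarrow> 'w \<Rightarrow> 'a) \<Rightarrow> nat \<Rightarrow> 'w \<Rightarrow> ('s \<times> 'a) list" where
  "histA S A n w = map (\<lambda>i. (S i w, A i w)) [0..<Suc n]"

end

theory Submission
  imports Defs
begin


lemma delta_sum: fixes g :: "'b::finite \<Rightarrow> real" shows "(\<Sum>z\<in>UNIV. (if x = z then 1 else 0) * g z) = (g x::real)"
proof -
  have "(\<Sum>z\<in>UNIV. (if x = z then 1 else 0) * g z) = (\<Sum>z\<in>UNIV. if x = z then g z else 0)"
    by (intro sum.cong) auto
  then show ?thesis using sum.delta'[of UNIV x g] by simp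
qed

lemma delta_sum2: fixes g :: "'b::finite \<Rightarrow> real" shows "(\<Sum>z\<in>UNIV. g z * (if z = y then 1 else 0)) = (g y::real)"
proof -
  have "(\<Sum>z\<in>UNIV. g z * (if z = y then 1 else 0)) = (\<Sum>z\<in>UNIV. if z = y then g z else 0)"
    by (intro sum.cong) auto
  then show ?thesis using sum.delta[of UNIV y g] by simp
qed

lemma kpow_nonneg:
  assumes "\<forall>x y. 0 \<le> P x y" shows "0 \<le> kpow P n x y"
  using assms by (induction n arbitrary: y) (auto intro!: sum_nonneg)

lemma kpow_sum1:
  assumes "\<forall>x y. 0 \<le> P x y" "\<forall>x. (\<Sum>y\<in>UNIV. P x y) = 1"
  shows "(\<Sum>y\<in>UNIV. kpow P n x y) = 1"
proof (induction n)
  case 0 then show ?case using delta_sum[of x "\<lambda>_. 1"] by simp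
next
  case (Suc n)
  have "(\<Sum>y\<in>UNIV. kpow P (Suc n) x y) = (\<Sum>y\<in>UNIV. \<Sum>z\<in>UNIV. kpow P n x z * P z y)"
    by simp
  also have "\<dots> = (\<Sum>z\<in>UNIV. \<Sum>y\<in>UNIV. kpow P n x z * P z y)"
    by (rule sum.swap)
  also have "\<dots> = (\<Sum>z\<in>UNIV. kpow P n x z * (\<Sum>y\<in>UNIV. P z y))"
    by (simp add: sum_distrib_left)
  also have "\<dots> = 1" using assms(2) Suc by simp
  finally show ?case .
qed

lemma kpow_Suc_left:
  "kpow P (Suc n) x y = (\<Sum>z\<in>UNIV. P x z * kpow P n z y)"
proof (induction n arbitrary: y)
  case 0 then show ?case by (simp add: delta_sum delta_sum2)
next
  case (Suc n)
  have "kpow P (Suc (Suc n)) x y = (\<Sum>w\<in>UNIV. (\<Sum>z\<in>UNIV. P x z * kpow P n z w) * P w y)"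
    using Suc by simp
  also have "\<dots> = (\<Sum>w\<in>UNIV. \<Sum>z\<in>UNIV. P x z * kpow P n z w * P w y)"
    by (simp add: sum_distrib_right)
  also have "\<dots> = (\<Sum>z\<in>UNIV. \<Sum>w\<in>UNIV. P x z * kpow P n z w * P w y)"
    by (rule sum.swap)
  also have "\<dots> = (\<Sum>z\<in>UNIV. P x z * (\<Sum>w\<in>UNIV. kpow P n z w * P w y))"
    by (simp add: sum_distrib_left mult.assoc)
  also have "\<dots> = (\<Sum>z\<in>UNIV. P x z * kpow P (Suc n) z y)" by simp
  finally show ?case .
qed

lemma sa_step_nonneg:
  assumes "is_kernel p" "is_policy pol" shows "\<forall>x y. 0 \<le> sa_step p pol x y"
  using assms by (auto simp: is_kernel_def is_policy_def sa_step_def)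

lemma sa_step_sum1:
  assumes "is_kernel p" "is_policy pol" shows "\<forall>x. (\<Sum>y\<in>UNIV. sa_step p pol x y) = 1"
proof
  fix x :: "'a \<times> 'b"
  have "(\<Sum>y\<in>UNIV. sa_step p pol x y) = (\<Sum>s'\<in>UNIV. \<Sum>a'\<in>UNIV. p (fst x) (snd x) s' * pol s' a')"
    unfolding sa_step_def UNIV_Times_UNIV[symmetric] sum.cartesian_product by (simp add: case_prod_beta)
  also have "\<dots> = (\<Sum>s'\<in>UNIV. p (fst x) (snd x) s')"
    using assms(2) by (simp add: sum_distrib_left[symmetric] is_policy_def)
  also have "\<dots> = 1" using assms(1) by (simp add: is_kernel_def)
  finally show "(\<Sum>y\<in>UNIV. sa_step p pol x y) = 1" .
qed

lemma term_bound:
  assumes "is_kernel p" "is_policy pol" "\<forall>s a. \<bar>R s a\<bar> \<le> 1"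
  shows "\<bar>\<Sum>y\<in>UNIV. kpow (sa_step p pol) k x y * R (fst y) (snd y)\<bar> \<le> 1"
proof -
  have nn: "\<And>y. 0 \<le> kpow (sa_step p pol) k x y"
    using kpow_nonneg sa_step_nonneg[OF assms(1,2)] by blast
  have "\<bar>\<Sum>y\<in>UNIV. kpow (sa_step p pol) k x y * R (fst y) (snd y)\<bar>
     \<le> (\<Sum>y\<in>UNIV. \<bar>kpow (sa_step p pol) k x y * R (fst y) (snd y)\<bar>)" by (rule sum_abs)
  also have "\<dots> \<le> (\<Sum>y\<in>UNIV. kpow (sa_step p pol) k x y)"
    apply (rule sum_mono) using nn assms(3) by (simp add: abs_mult mult_left_le)
  also have "\<dots> = 1" using kpow_sum1 sa_step_nonneg[OF assms(1,2)] sa_step_sum1[OF assms(1,2)] by blast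
  finally show ?thesis .
qed

lemma term_bound2:
  assumes "is_kernel p" "is_policy pol" "\<forall>s a. \<bar>R s a\<bar> \<le> 1" "0 \<le> \<gamma>"
  shows "\<bar>\<gamma> ^ k * (\<Sum>y\<in>UNIV. kpow (sa_step p pol) k x y * R (fst y) (snd y))\<bar> \<le> \<gamma>^k"
proof -
  have "\<bar>\<gamma> ^ k * (\<Sum>y\<in>UNIV. kpow (sa_step p pol) k x y * R (fst y) (snd y))\<bar>
     = \<gamma>^k * \<bar>\<Sum>y\<in>UNIV. kpow (sa_step p pol) k x y * R (fst y) (snd y)\<bar>"
    using assms(4) by (simp add: abs_mult)
  also have "\<dots> \<le> \<gamma>^k * 1"
    by (rule mult_left_mono[OF term_bound[OF assms(1-3)]]) (use assms(4) in simp)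
  finally show ?thesis by simp
qed

lemma Qfun_summable:
  assumes "is_kernel p" "is_policy pol" "\<forall>s a. \<bar>R s a\<bar> \<le> 1" "0 \<le> \<gamma>" "\<gamma> < 1"
  shows "summable (\<lambda>k. \<gamma> ^ k * (\<Sum>y\<in>UNIV. kpow (sa_step p pol) k x y * R (fst y) (snd y)))"
proof (rule summable_comparison_test[where g="\<lambda>k. \<gamma>^k"])
  show "\<exists>N. \<forall>n\<ge>N. norm (\<gamma> ^ n * (\<Sum>y\<in>UNIV. kpow (sa_step p pol) n x y * R (fst y) (snd y))) \<le> \<gamma> ^ n"
    using term_bound2[OF assms(1-4)] by auto
  show "summable (\<lambda>k. \<gamma>^k)" using assms(4,5) by simp
qed

lemma Qfun_bound:
  assumes "is_kernel p" "is_policy pol" "\<forall>s a. \<bar>R s a\<bar> \<le> 1" "0 \<le> \<gamma>" "\<gamma> < 1"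
  shows "\<bar>Qfun p R \<gamma> pol s a\<bar> \<le> 1 / (1 - \<gamma>)"
proof -
  let ?f = "\<lambda>k. \<gamma> ^ k * (\<Sum>y\<in>UNIV. kpow (sa_step p pol) k (s,a) y * R (fst y) (snd y))"
  have sf: "summable ?f" by (rule Qfun_summable[OF assms])
  have sg: "summable (\<lambda>k. \<gamma>^k)" using assms(4,5) by simp
  have b: "\<And>k. \<bar>?f k\<bar> \<le> \<gamma>^k" by (rule term_bound2[OF assms(1-4)])
  have "suminf ?f \<le> (\<Sum>k. \<gamma>^k)" using b by (intro suminf_le[OF _ sf sg]) (auto simp: abs_le_iff)
  moreover have "- suminf ?f \<le> (\<Sum>k. \<gamma>^k)" unfolding suminf_minus[OF sf, symmetric]
    using b by (intro suminf_le[OF _ summable_minus[OF sf] sg]) (auto simp: abs_le_iff)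
  moreover have "(\<Sum>k. \<gamma>^k) = 1 / (1 - \<gamma>)" using assms(4,5) by (simp add: suminf_geometric)
  ultimately show ?thesis unfolding Qfun_def by auto
qed

lemma Qfun_bellman:
  assumes "is_kernel p" "is_policy pol" "\<forall>s a. \<bar>R s a\<bar> \<le> 1" "0 \<le> \<gamma>" "\<gamma> < 1"
  shows "Qfun p R \<gamma> pol s a = R s a + \<gamma> * (\<Sum>z\<in>UNIV. sa_step p pol (s,a) z * Qfun p R \<gamma> pol (fst z) (snd z))"
proof -
  define P where "P = sa_step p pol"
  define f where "f x k = \<gamma> ^ k * (\<Sum>y\<in>UNIV. kpow P k x y * R (fst y) (snd y))" for x k
  have sf: "\<And>x. summable (f x)" unfolding f_def P_def using Qfun_summable[OF assms] by blast
  have Q: "\<And>s a. Qfun p R \<gamma> pol s a = suminf (f (s,a))" unfolding Qfun_def f_def P_def by simp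
  have f0: "f x 0 = R (fst x) (snd x)" for x
    unfolding f_def by (simp add: delta_sum)
  have fS: "f x (Suc n) = \<gamma> * (\<Sum>z\<in>UNIV. P x z * f z n)" for x n
  proof -
    have "f x (Suc n) = \<gamma> * \<gamma>^n * (\<Sum>y\<in>UNIV. (\<Sum>z\<in>UNIV. P x z * kpow P n z y) * R (fst y) (snd y))"
      unfolding f_def kpow_Suc_left by simp
    also have "\<dots> = \<gamma> * \<gamma>^n * (\<Sum>y\<in>UNIV. \<Sum>z\<in>UNIV. P x z * kpow P n z y * R (fst y) (snd y))"
      by (simp add: sum_distrib_right)
    also have "\<dots> = \<gamma> * \<gamma>^n * (\<Sum>z\<in>UNIV. \<Sum>y\<in>UNIV. P x z * kpow P n z y * R (fst y) (snd y))"
      by (subst sum.swap) (rule refl)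
    also have "\<dots> = \<gamma> * (\<Sum>z\<in>UNIV. P x z * f z n)"
      unfolding f_def by (simp add: sum_distrib_left mult_ac)
    finally show ?thesis .
  qed
  have "suminf (f (s,a)) = f (s,a) 0 + (\<Sum>n. f (s,a) (Suc n))"
    using suminf_split_head[OF sf] by simp
  also have "(\<Sum>n. f (s,a) (Suc n)) = (\<Sum>n. \<gamma> * (\<Sum>z\<in>UNIV. P (s,a) z * f z n))"
    unfolding fS ..
  also have "\<dots> = \<gamma> * (\<Sum>n. (\<Sum>z\<in>UNIV. P (s,a) z * f z n))"
    by (rule suminf_mult) (intro summable_sum summable_mult sf)
  also have "(\<Sum>n. (\<Sum>z\<in>UNIV. P (s,a) z * f z n)) = (\<Sum>z\<in>UNIV. \<Sum>n. P (s,a) z * f z n)"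
    by (rule suminf_sum) (intro summable_mult sf)
  also have "\<dots> = (\<Sum>z\<in>UNIV. P (s,a) z * suminf (f z))"
    by (intro sum.cong refl suminf_mult sf)
  finally show ?thesis unfolding Q f0 P_def by simp
qed

lemma supnorm_ge: "\<bar>f s a\<bar> \<le> supnorm f"
  unfolding supnorm_def by (rule Max_ge) auto

lemma supnorm_le: "(\<And>s a. \<bar>f s a\<bar> \<le> c) \<Longrightarrow> supnorm f \<le> c"
  unfolding supnorm_def by (subst Max_le_iff) auto

lemma supnorm_nonneg: "0 \<le> supnorm f"
  using supnorm_ge[of f] abs_ge_zero order_trans by blast

lemma max_ge: fixes q :: "'a::finite \<Rightarrow> real" shows "q a \<le> Max (range q)"
  by (rule Max_ge) auto

lemma max_in: fixes q :: "'a::finite \<Rightarrow> real" shows "\<exists>a. Max (range q) = q a"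
proof -
  have "Max (range q) \<in> range q" by (rule Max_in) auto
  then show ?thesis by (metis rangeE)
qed

lemma conv_le_max:
  fixes q :: "'a::finite \<Rightarrow> real"
  assumes "\<forall>a. 0 \<le> w a" "(\<Sum>a\<in>UNIV. w a) = 1"
  shows "(\<Sum>a\<in>UNIV. w a * q a) \<le> Max (range q)"
proof -
  have "(\<Sum>a\<in>UNIV. w a * q a) \<le> (\<Sum>a\<in>UNIV. w a * Max (range q))"
    by (intro sum_mono mult_left_mono max_ge) (use assms in auto)
  also have "\<dots> = Max (range q)" using assms(2) by (simp add: sum_distrib_right[symmetric])
  finally show ?thesis .
qed

lemma unif_policy: "is_policy (\<lambda>(s::'s::finite) (a::'a::finite). 1 / real CARD('a))"
  unfolding is_policy_def by auto

lemma Qstar_props: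
  assumes "is_kernel p" "\<forall>s a. \<bar>R s a\<bar> \<le> 1" "0 \<le> \<gamma>" "\<gamma> < 1"
  shows "\<And>pol. is_policy pol \<Longrightarrow> Qfun p R \<gamma> pol s a \<le> Qstar p R \<gamma> s a"
    and "\<bar>Qstar p R \<gamma> s a\<bar> \<le> 1 / (1 - \<gamma>)"
    and "\<And>c. (\<And>pol. is_policy pol \<Longrightarrow> Qfun p R \<gamma> pol s a \<le> c) \<Longrightarrow> Qstar p R \<gamma> s a \<le> c"
proof -
  have bdd: "bdd_above ((\<lambda>pol. Qfun p R \<gamma> pol s a) ` {pol. is_policy pol})"
    using Qfun_bound[OF assms(1) _ assms(2-4)] by (intro bdd_aboveI2[where M="1/(1-\<gamma>)"]) (auto simp: abs_le_iff)
  have ne: "{pol. is_policy pol} \<noteq> {}" using unif_policy by auto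
  show ge: "\<And>pol. is_policy pol \<Longrightarrow> Qfun p R \<gamma> pol s a \<le> Qstar p R \<gamma> s a"
    unfolding Qstar_def by (rule cSUP_upper[OF _ bdd]) auto
  show le: "\<And>c. (\<And>pol. is_policy pol \<Longrightarrow> Qfun p R \<gamma> pol s a \<le> c) \<Longrightarrow> Qstar p R \<gamma> s a \<le> c"
    unfolding Qstar_def by (rule cSUP_least[OF ne]) auto
  have "Qstar p R \<gamma> s a \<le> 1 / (1 - \<gamma>)"
    using Qfun_bound[OF assms(1) _ assms(2-4)] by (intro le) (auto simp: abs_le_iff)
  moreover have "- (1 / (1 - \<gamma>)) \<le> Qstar p R \<gamma> s a"
  proof -
    have "\<bar>Qfun p R \<gamma> (\<lambda>s a. 1 / real CARD('b)) s a\<bar> \<le> 1 / (1 - \<gamma>)"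
      by (rule Qfun_bound[OF assms(1) unif_policy assms(2-4)])
    then show ?thesis using ge[OF unif_policy] by linarith
  qed
  ultimately show "\<bar>Qstar p R \<gamma> s a\<bar> \<le> 1 / (1 - \<gamma>)" by auto
qed

lemma sa_sum:
  "(\<Sum>z\<in>UNIV. sa_step p pol x z * q (fst z) (snd z))
    = (\<Sum>s'\<in>UNIV. p (fst x) (snd x) s' * (\<Sum>a'\<in>UNIV. pol s' a' * q s' a'))"
proof -
  have "(\<Sum>s'\<in>UNIV. p (fst x) (snd x) s' * (\<Sum>a'\<in>UNIV. pol s' a' * q s' a'))
     = (\<Sum>s'\<in>UNIV. \<Sum>a'\<in>UNIV. p (fst x) (snd x) s' * (pol s' a' * q s' a'))"
    by (simp add: sum_distrib_left)
  also have "\<dots> = (\<Sum>(s',a')\<in>UNIV \<times> UNIV. p (fst x) (snd x) s' * (pol s' a' * q s' a'))"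
    by (rule sum.cartesian_product)
  also have "\<dots> = (\<Sum>z\<in>UNIV. sa_step p pol x z * q (fst z) (snd z))"
    by (simp add: sa_step_def case_prod_beta mult_ac)
  finally show ?thesis by simp
qed

lemma gap:
  fixes p :: "'s::finite \<Rightarrow> 'a::finite \<Rightarrow> 's \<Rightarrow> real"
  assumes ker: "is_kernel p" and rew: "\<forall>s a. \<bar>R s a\<bar> \<le> 1" and g: "0 \<le> \<gamma>" "\<gamma> < 1"
    and pol: "is_policy \<pi>"
    and C: "\<And>s. Max (range (Qstar p R \<gamma> s)) - (\<Sum>a\<in>UNIV. \<pi> s a * Qstar p R \<gamma> s a) \<le> C"
  shows "supnorm (\<lambda>s a. Qfun p R \<gamma> \<pi> s a - Qstar p R \<gamma> s a) \<le> \<gamma> * C / (1 - \<gamma>)"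
proof -
  define D where "D = supnorm (\<lambda>s a. Qfun p R \<gamma> \<pi> s a - Qstar p R \<gamma> s a)"
  let ?Qs = "Qstar p R \<gamma>"
  have Dge: "\<And>s a. \<bar>Qfun p R \<gamma> \<pi> s a - ?Qs s a\<bar> \<le> D" unfolding D_def by (rule supnorm_ge)
  have le_star: "\<And>pol s a. is_policy pol \<Longrightarrow> Qfun p R \<gamma> pol s a \<le> ?Qs s a"
    by (rule Qstar_props(1)[OF ker rew g])
  have pw: "\<And>s a. ?Qs s a \<le> Qfun p R \<gamma> \<pi> s a + \<gamma> * (C + D)"
  proof -
    fix s a
    show "?Qs s a \<le> Qfun p R \<gamma> \<pi> s a + \<gamma> * (C + D)"
    proof (rule Qstar_props(3)[OF ker rew g])
      fix pol :: "'s \<Rightarrow> 'a \<Rightarrow> real" assume pol': "is_policy pol"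
      have inner: "(\<Sum>a'\<in>UNIV. pol s' a' * Qfun p R \<gamma> pol s' a') - (\<Sum>a'\<in>UNIV. \<pi> s' a' * Qfun p R \<gamma> \<pi> s' a')
          \<le> C + D" for s'
      proof -
        have "(\<Sum>a'\<in>UNIV. pol s' a' * Qfun p R \<gamma> pol s' a') \<le> (\<Sum>a'\<in>UNIV. pol s' a' * ?Qs s' a')"
          by (intro sum_mono mult_left_mono le_star pol') (use pol' in \<open>auto simp: is_policy_def\<close>)
        also have "\<dots> \<le> Max (range (?Qs s'))"
          by (rule conv_le_max) (use pol' in \<open>auto simp: is_policy_def\<close>)
        finally have 1: "(\<Sum>a'\<in>UNIV. pol s' a' * Qfun p R \<gamma> pol s' a') \<le> Max (range (?Qs s'))" .
        have "(\<Sum>a'\<in>UNIV. \<pi> s' a' * ?Qs s' a') - D = (\<Sum>a'\<in>UNIV. \<pi> s' a' * (?Qs s' a' - D))"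
          using pol by (simp add: is_policy_def sum_subtractf right_diff_distrib sum_distrib_right[symmetric])
        also have "\<dots> \<le> (\<Sum>a'\<in>UNIV. \<pi> s' a' * Qfun p R \<gamma> \<pi> s' a')"
        proof (intro sum_mono mult_left_mono)
          fix a'
          show "?Qs s' a' - D \<le> Qfun p R \<gamma> \<pi> s' a'" using Dge[of s' a'] by (simp add: abs_le_iff)
          show "0 \<le> \<pi> s' a'" using pol by (simp add: is_policy_def)
        qed
        finally have 2: "(\<Sum>a'\<in>UNIV. \<pi> s' a' * ?Qs s' a') - D \<le> (\<Sum>a'\<in>UNIV. \<pi> s' a' * Qfun p R \<gamma> \<pi> s' a')" .
        show ?thesis using 1 2 C[of s'] by linarith
      qed
      have "Qfun p R \<gamma> pol s a - Qfun p R \<gamma> \<pi> s a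
          = \<gamma> * (\<Sum>s'\<in>UNIV. p s a s' * ((\<Sum>a'\<in>UNIV. pol s' a' * Qfun p R \<gamma> pol s' a') - (\<Sum>a'\<in>UNIV. \<pi> s' a' * Qfun p R \<gamma> \<pi> s' a')))"
        apply (subst Qfun_bellman[OF ker pol' rew g])
        apply (subst Qfun_bellman[OF ker pol rew g])
        by (simp add: sa_sum right_diff_distrib sum_subtractf)
      also have "\<dots> \<le> \<gamma> * (\<Sum>s'\<in>UNIV. p s a s' * (C + D))"
        apply (intro mult_left_mono sum_mono) using inner ker g by (auto simp: is_kernel_def)
      also have "\<dots> = \<gamma> * (C + D)"
        using ker by (simp add: is_kernel_def sum_distrib_right[symmetric])
      finally show "Qfun p R \<gamma> pol s a \<le> Qfun p R \<gamma> \<pi> s a + \<gamma> * (C + D)" by simp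
    qed
  qed
  obtain s0 :: 's where True by simp
  have "(\<Sum>a\<in>UNIV. \<pi> s0 a * ?Qs s0 a) \<le> Max (range (?Qs s0))"
    by (rule conv_le_max) (use pol in \<open>auto simp: is_policy_def\<close>)
  then have Cnn: "0 \<le> C" using C[of s0] by linarith
  have Dnn: "0 \<le> D" unfolding D_def by (rule supnorm_nonneg)
  have "supnorm (\<lambda>s a. Qfun p R \<gamma> \<pi> s a - Qstar p R \<gamma> s a) \<le> \<gamma> * (C + D)"
  proof (rule supnorm_le)
    fix s a
    have "0 \<le> \<gamma> * (C + D)" using Cnn Dnn g by simp
    then show "\<bar>Qfun p R \<gamma> \<pi> s a - Qstar p R \<gamma> s a\<bar> \<le> \<gamma> * (C + D)"
      using pw[of s a] le_star[OF pol, of s a] by (simp add: abs_le_iff)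
  qed
  then have "D \<le> \<gamma> * (C + D)" unfolding D_def[symmetric] .
  then have "D * (1 - \<gamma>) \<le> \<gamma> * C" by (simp add: algebra_simps)
  then show ?thesis unfolding D_def[symmetric] using g by (simp add: pos_le_divide_eq)
qed

lemma softmax_gap:
  fixes f :: "'a::finite \<Rightarrow> real"
  assumes tau: "0 < \<tau>"
  shows "Max (range f) - (\<Sum>a\<in>UNIV. exp (f a / \<tau>) / (\<Sum>a'\<in>UNIV. exp (f a' / \<tau>)) * f a)
           \<le> \<tau> * ln (real CARD('a))"
proof -
  define Z where "Z = (\<Sum>a'\<in>UNIV. exp (f a' / \<tau>))"
  define \<sigma> where "\<sigma> a = exp (f a / \<tau>) / Z" for a
  define n where "n = real CARD('a)"
  have npos: "0 < n" unfolding n_def by simp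
  have Zpos: "0 < Z" unfolding Z_def by (intro sum_pos) auto
  have spos: "\<And>a. 0 < \<sigma> a" unfolding \<sigma>_def using Zpos by simp
  have ssum: "(\<Sum>a\<in>UNIV. \<sigma> a) = 1" unfolding \<sigma>_def using Zpos
    by (simp add: sum_divide_distrib[symmetric] Z_def)
  have lns: "\<And>a. ln (\<sigma> a) = f a / \<tau> - ln Z" unfolding \<sigma>_def using Zpos by (simp add: ln_div)
  have fa: "\<And>a. f a = \<tau> * ln (\<sigma> a) + \<tau> * ln Z" using lns tau by (simp add: field_simps)
  obtain a0 where a0: "Max (range f) = f a0" using max_in by blast
  have "exp (f a0 / \<tau>) \<le> Z" unfolding Z_def
    by (rule member_le_sum) auto
  then have "f a0 / \<tau> \<le> ln Z" using Zpos by (simp add: ln_ge_iff)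
  then have M: "Max (range f) \<le> \<tau> * ln Z" using a0 tau by (simp add: pos_divide_le_eq mult.commute)
  have ent: "(\<Sum>a\<in>UNIV. \<sigma> a * (- ln n - ln (\<sigma> a))) \<le> 0"
  proof -
    have "(\<Sum>a\<in>UNIV. \<sigma> a * (- ln n - ln (\<sigma> a))) = (\<Sum>a\<in>UNIV. \<sigma> a * ln (1 / (n * \<sigma> a)))"
      using npos spos by (intro sum.cong refl) (simp add: ln_div ln_mult)
    also have "\<dots> \<le> (\<Sum>a\<in>UNIV. \<sigma> a * (1 / (n * \<sigma> a) - 1))"
      using npos spos by (intro sum_mono mult_left_mono ln_le_minus_one) (auto intro: less_imp_le)
    also have "\<dots> = (\<Sum>a\<in>UNIV. (1 / n - \<sigma> a))"
    proof (intro sum.cong refl)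
      fix a
      have "\<sigma> a \<noteq> 0" using spos[of a] by simp
      then show "\<sigma> a * (1 / (n * \<sigma> a) - 1) = 1 / n - \<sigma> a" using npos by (simp add: field_simps)
    qed
    also have "\<dots> = 0" using ssum unfolding sum_subtractf n_def by simp
    finally show ?thesis .
  qed
  have "(\<Sum>a\<in>UNIV. \<sigma> a * f a) = \<tau> * (\<Sum>a\<in>UNIV. \<sigma> a * ln (\<sigma> a)) + \<tau> * ln Z"
  proof -
    have "(\<Sum>a\<in>UNIV. \<sigma> a * f a) = (\<Sum>a\<in>UNIV. \<tau> * (\<sigma> a * ln (\<sigma> a)) + (\<tau> * ln Z) * \<sigma> a)"
      by (intro sum.cong refl) (simp add: fa algebra_simps)
    also have "\<dots> = \<tau> * (\<Sum>a\<in>UNIV. \<sigma> a * ln (\<sigma> a)) + (\<tau> * ln Z) * (\<Sum>a\<in>UNIV. \<sigma> a)"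
      by (simp add: sum.distrib sum_distrib_left)
    finally show ?thesis using ssum by simp
  qed
  moreover have "- ln n \<le> (\<Sum>a\<in>UNIV. \<sigma> a * ln (\<sigma> a))"
  proof -
    have "(\<Sum>a\<in>UNIV. \<sigma> a * (- ln n - ln (\<sigma> a))) = - ln n * (\<Sum>a\<in>UNIV. \<sigma> a) - (\<Sum>a\<in>UNIV. \<sigma> a * ln (\<sigma> a))"
      by (simp add: right_diff_distrib sum_subtractf sum_distrib_left mult_ac)
    then show ?thesis using ent ssum by simp
  qed
  ultimately have "\<tau> * ln Z - \<tau> * ln n \<le> (\<Sum>a\<in>UNIV. \<sigma> a * f a)"
    using mult_left_mono[of "- ln n" "\<Sum>a\<in>UNIV. \<sigma> a * ln (\<sigma> a)" \<tau>] tau by simp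
  then show ?thesis using M unfolding \<sigma>_def Z_def n_def by linarith
qed

lemma sq3: fixes a b c :: real shows "(a+b+c)^2 \<le> 3*(a^2+b^2+c^2)"
proof -
  have "0 \<le> (a-b)^2 + (b-c)^2 + (a-c)^2" by simp
  then show ?thesis by (simp add: power2_eq_square algebra_simps)
qed
lemma idt: fixes g K e E L :: real shows
  "(g * K)\<^sup>2 * (3 * ((2 * e * K)\<^sup>2 + (2 * E)\<^sup>2 + L\<^sup>2)) = g\<^sup>2 * (12 * K\<^sup>2 * E\<^sup>2 + 12 * e\<^sup>2 * K^4 + 3 * K\<^sup>2 * L\<^sup>2)"
  by algebra

lemma t1: fixes g2 X Y :: real shows "0 \<le> g2 \<Longrightarrow> g2 \<le> 1 \<Longrightarrow> 0 \<le> X \<Longrightarrow> g2*(Y + X) \<le> g2*Y + X"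
  by (simp add: distrib_left mult_left_le_one_le)
lemma eq2: fixes x g E e t l :: real shows "12*g^2*(1/x)^2*E^2 + 12*e^2*(1/x)^4 + 3*(1/x)^2*(t*l)^2 = 12*g^2/x^2*E^2 + 12*e^2/x^4 + 3*t^2*l^2/x^2"
  by (simp add: power_divide power_mult_distrib)

lemma softpol_policy:
  assumes "0 \<le> \<epsilon>" "\<epsilon> \<le> 1"
  shows "is_policy (softpol \<epsilon> \<tau> (Qk :: 's::finite \<Rightarrow> 'a::finite \<Rightarrow> real))"
  unfolding is_policy_def
proof (intro conjI allI)
  fix s a
  have "0 < (\<Sum>a'\<in>UNIV. exp (Qk s a' / \<tau>))" by (intro sum_pos) auto
  then show "0 \<le> softpol \<epsilon> \<tau> Qk s a" unfolding softpol_def using assms by (intro add_nonneg_nonneg) auto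
next
  fix s
  have Z: "0 < (\<Sum>a'\<in>UNIV. exp (Qk s a' / \<tau>))" by (intro sum_pos) auto
  have "(\<Sum>a\<in>UNIV. softpol \<epsilon> \<tau> Qk s a) = \<epsilon> + (1 - \<epsilon>) * (\<Sum>a\<in>UNIV. exp (Qk s a / \<tau>)) / (\<Sum>a'\<in>UNIV. exp (Qk s a' / \<tau>))"
    unfolding softpol_def by (simp add: sum.distrib sum_divide_distrib[symmetric] sum_distrib_left[symmetric])
  then show "(\<Sum>a\<in>UNIV. softpol \<epsilon> \<tau> Qk s a) = 1" using Z by simp
qed

lemma softpol_C:
  fixes Qs Qk :: "'s::finite \<Rightarrow> 'a::finite \<Rightarrow> real"
  assumes K: "\<And>s a. \<bar>Qs s a\<bar> \<le> K" and eps: "0 \<le> \<epsilon>" "\<epsilon> \<le> 1" and tau: "0 < \<tau>"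
  shows "Max (range (Qs s)) - (\<Sum>a\<in>UNIV. softpol \<epsilon> \<tau> Qk s a * Qs s a)
     \<le> 2 * \<epsilon> * K + 2 * supnorm (\<lambda>s a. Qk s a - Qs s a) + \<tau> * ln (real CARD('a))"
proof -
  define E where "E = supnorm (\<lambda>s a. Qk s a - Qs s a)"
  define L where "L = \<tau> * ln (real CARD('a))"
  define Z where "Z = (\<Sum>a'\<in>UNIV. exp (Qk s a' / \<tau>))"
  define \<sigma> where "\<sigma> a = exp (Qk s a / \<tau>) / Z" for a
  define n where "n = real CARD('a)"
  define Ms where "Ms = Max (range (Qs s))"
  have npos: "0 < n" unfolding n_def by simp
  have Zpos: "0 < Z" unfolding Z_def by (intro sum_pos) auto
  have spos: "\<And>a. 0 \<le> \<sigma> a" unfolding \<sigma>_def using Zpos by simp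
  have ssum: "(\<Sum>a\<in>UNIV. \<sigma> a) = 1" unfolding \<sigma>_def using Zpos
    by (simp add: sum_divide_distrib[symmetric] Z_def)
  have E: "\<And>a. \<bar>Qk s a - Qs s a\<bar> \<le> E" unfolding E_def by (rule supnorm_ge)
  have Enn: "0 \<le> E" unfolding E_def by (rule supnorm_nonneg)
  have Lnn: "0 \<le> L" unfolding L_def using tau by simp
  have sp: "\<And>a. softpol \<epsilon> \<tau> Qk s a = \<epsilon> / n + (1 - \<epsilon>) * \<sigma> a"
    unfolding softpol_def \<sigma>_def Z_def n_def by simp
  have split: "(\<Sum>a\<in>UNIV. softpol \<epsilon> \<tau> Qk s a * Qs s a)
      = \<epsilon> * ((\<Sum>a\<in>UNIV. Qs s a) / n) + (1 - \<epsilon>) * (\<Sum>a\<in>UNIV. \<sigma> a * Qs s a)"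
  proof -
    have "(\<Sum>a\<in>UNIV. softpol \<epsilon> \<tau> Qk s a * Qs s a) = (\<Sum>a\<in>UNIV. \<epsilon> / n * Qs s a + (1 - \<epsilon>) * (\<sigma> a * Qs s a))"
      unfolding sp by (intro sum.cong refl) (simp add: algebra_simps)
    also have "\<dots> = \<epsilon> / n * (\<Sum>a\<in>UNIV. Qs s a) + (1 - \<epsilon>) * (\<Sum>a\<in>UNIV. \<sigma> a * Qs s a)"
      by (simp add: sum.distrib sum_distrib_left)
    finally show ?thesis by simp
  qed
  have avg: "Ms - (\<Sum>a\<in>UNIV. Qs s a) / n \<le> 2 * K"
  proof -
    obtain a1 where "Ms = Qs s a1" unfolding Ms_def using max_in by blast
    then have 1: "Ms \<le> K" using K[of s a1] by simp
    have lb: "- K \<le> Qs s a" for a using K[of s a] by linarith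
    have "of_nat (card (UNIV :: 'a set)) * (- K) \<le> (\<Sum>a\<in>UNIV. Qs s a)"
      by (rule sum_bounded_below) (rule lb)
    then have "n * (- K) \<le> (\<Sum>a\<in>UNIV. Qs s a)" unfolding n_def by simp
    then have 2: "- K \<le> (\<Sum>a\<in>UNIV. Qs s a) / n" using npos by (simp add: pos_le_divide_eq mult.commute)
    show ?thesis using 1 2 by linarith
  qed
  have sm: "Ms - (\<Sum>a\<in>UNIV. \<sigma> a * Qs s a) \<le> 2 * E + L"
  proof -
    obtain a1 where a1: "Ms = Qs s a1" unfolding Ms_def using max_in by blast
    have "Qk s a1 \<le> Max (range (Qk s))" by (rule max_ge)
    then have 1: "Ms \<le> Max (range (Qk s)) + E" using a1 E[of a1] unfolding abs_le_iff by linarith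
    have 2: "Max (range (Qk s)) - (\<Sum>a\<in>UNIV. \<sigma> a * Qk s a) \<le> L"
      unfolding \<sigma>_def Z_def L_def by (rule softmax_gap[OF tau])
    have "(\<Sum>a\<in>UNIV. \<sigma> a * Qk s a) - (\<Sum>a\<in>UNIV. \<sigma> a * Qs s a) = (\<Sum>a\<in>UNIV. \<sigma> a * (Qk s a - Qs s a))"
      by (simp add: sum_subtractf right_diff_distrib)
    also have "\<dots> \<le> (\<Sum>a\<in>UNIV. \<sigma> a * E)"
    proof (intro sum_mono mult_left_mono)
      fix a
      show "Qk s a - Qs s a \<le> E" using E[of a] by linarith
      show "0 \<le> \<sigma> a" by (rule spos)
    qed
    also have "\<dots> = E" using ssum by (simp add: sum_distrib_right[symmetric])
    finally show ?thesis using 1 2 by linarith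
  qed
  have "Ms - (\<Sum>a\<in>UNIV. softpol \<epsilon> \<tau> Qk s a * Qs s a)
      = \<epsilon> * (Ms - (\<Sum>a\<in>UNIV. Qs s a) / n) + (1 - \<epsilon>) * (Ms - (\<Sum>a\<in>UNIV. \<sigma> a * Qs s a))"
    unfolding split by (simp add: algebra_simps)
  also have "\<dots> \<le> \<epsilon> * (2 * K) + (1 - \<epsilon>) * (2 * E + L)"
    by (intro add_mono mult_left_mono avg sm) (use eps in auto)
  also have "\<dots> \<le> \<epsilon> * (2 * K) + (2 * E + L)"
    using eps Enn Lnn by (simp add: algebra_simps)
  finally show ?thesis unfolding Ms_def E_def L_def by (simp add: algebra_simps)
qed

lemma pointwise:
  fixes p :: "'s::finite \<Rightarrow> 'a::finite \<Rightarrow> 's \<Rightarrow> real"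
  assumes ker: "is_kernel p" and rew: "\<forall>s a. \<bar>R s a\<bar> \<le> 1" and g: "0 < \<gamma>" "\<gamma> < 1"
    and eps: "0 < \<epsilon>" "\<epsilon> \<le> 1" and tau: "0 < \<tau>"
  shows "(supnorm (\<lambda>s a. Qfun p R \<gamma> (softpol \<epsilon> \<tau> Qk) s a - Qstar p R \<gamma> s a))\<^sup>2
    \<le> 12 * \<gamma>\<^sup>2 / (1 - \<gamma>)\<^sup>2 * (supnorm (\<lambda>s a. Qk s a - Qstar p R \<gamma> s a))\<^sup>2
      + 12 * \<epsilon>\<^sup>2 / (1 - \<gamma>) ^ 4
      + 3 * \<tau>\<^sup>2 * (ln (real CARD('a)))\<^sup>2 / (1 - \<gamma>)\<^sup>2"
proof -
  define D where "D = supnorm (\<lambda>s a. Qfun p R \<gamma> (softpol \<epsilon> \<tau> Qk) s a - Qstar p R \<gamma> s a)"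
  define E where "E = supnorm (\<lambda>s a. Qk s a - Qstar p R \<gamma> s a)"
  define L where "L = \<tau> * ln (real CARD('a))"
  define K where "K = 1 / (1 - \<gamma>)"
  have Kpos: "0 < K" unfolding K_def using g by simp
  have Dnn: "0 \<le> D" unfolding D_def by (rule supnorm_nonneg)
  have Enn: "0 \<le> E" unfolding E_def by (rule supnorm_nonneg)
  have Lnn: "0 \<le> L" unfolding L_def using tau by simp
  have "D \<le> \<gamma> * (2 * \<epsilon> * K + 2 * E + L) / (1 - \<gamma>)"
    unfolding D_def
  proof (rule gap[OF ker rew _ g(2) softpol_policy])
    fix s
    show "Max (range (Qstar p R \<gamma> s)) - (\<Sum>a\<in>UNIV. softpol \<epsilon> \<tau> Qk s a * Qstar p R \<gamma> s a)
       \<le> 2 * \<epsilon> * K + 2 * E + L"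
      unfolding E_def L_def K_def
      by (rule softpol_C) (use Qstar_props(2)[OF ker rew _ g(2)] g eps tau in auto)
  qed (use g eps in auto)
  then have "D \<le> \<gamma> * K * (2 * \<epsilon> * K + 2 * E + L)" unfolding K_def by simp
  then have "D\<^sup>2 \<le> (\<gamma> * K * (2 * \<epsilon> * K + 2 * E + L))\<^sup>2"
    using Dnn by (intro power_mono) auto
  also have "\<dots> = (\<gamma> * K)\<^sup>2 * (2 * \<epsilon> * K + 2 * E + L)\<^sup>2" by (simp add: power_mult_distrib)
  also have "\<dots> \<le> (\<gamma> * K)\<^sup>2 * (3 * ((2 * \<epsilon> * K)\<^sup>2 + (2 * E)\<^sup>2 + L\<^sup>2))"
  proof (rule mult_left_mono)
    show "(2 * \<epsilon> * K + 2 * E + L)\<^sup>2 \<le> 3 * ((2 * \<epsilon> * K)\<^sup>2 + (2 * E)\<^sup>2 + L\<^sup>2)"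
      by (rule sq3)
  qed simp
  also have "\<dots> = \<gamma>\<^sup>2 * (12 * K\<^sup>2 * E\<^sup>2 + 12 * \<epsilon>\<^sup>2 * K^4 + 3 * K\<^sup>2 * L\<^sup>2)"
    by (rule idt)
  also have "\<dots> = \<gamma>\<^sup>2 * (12 * K\<^sup>2 * E\<^sup>2 + (12 * \<epsilon>\<^sup>2 * K^4 + 3 * K\<^sup>2 * L\<^sup>2))"
    by (simp add: add.assoc)
  also have "\<dots> \<le> \<gamma>\<^sup>2 * (12 * K\<^sup>2 * E\<^sup>2) + (12 * \<epsilon>\<^sup>2 * K^4 + 3 * K\<^sup>2 * L\<^sup>2)"
    by (rule t1) (use g in \<open>auto simp: power_le_one\<close>)
  also have "\<dots> = 12 * \<gamma>\<^sup>2 * (1 / (1 - \<gamma>))\<^sup>2 * E\<^sup>2 + 12 * \<epsilon>\<^sup>2 * (1 / (1 - \<gamma>))^4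
       + 3 * (1 / (1 - \<gamma>))\<^sup>2 * (\<tau> * ln (real CARD('a)))\<^sup>2"
    unfolding K_def L_def by (simp add: mult_ac)
  also have "\<dots> = 12 * \<gamma>\<^sup>2 / (1 - \<gamma>)\<^sup>2 * E\<^sup>2 + 12 * \<epsilon>\<^sup>2 / (1 - \<gamma>) ^ 4
      + 3 * \<tau>\<^sup>2 * (ln (real CARD('a)))\<^sup>2 / (1 - \<gamma>)\<^sup>2"
    by (rule eq2)
  finally show ?thesis unfolding D_def E_def .
qed



lemma upd_bound:
  fixes q r m b \<alpha> \<gamma> :: real
  assumes "\<bar>q\<bar> \<le> b" "\<bar>r\<bar> \<le> 1" "\<bar>m\<bar> \<le> b" "0 < \<alpha>" "0 \<le> \<gamma>" "\<gamma> \<le> 1"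
  shows "\<bar>q + \<alpha> * (r + \<gamma> * m - q)\<bar> \<le> (1 + 2 * \<alpha>) * b + \<alpha>"
proof -
  have "q + \<alpha> * (r + \<gamma> * m - q) = (1 - \<alpha>) * q + \<alpha> * r + \<alpha> * (\<gamma> * m)" by (simp add: algebra_simps)
  then have "\<bar>q + \<alpha> * (r + \<gamma> * m - q)\<bar> \<le> \<bar>(1 - \<alpha>) * q\<bar> + \<bar>\<alpha> * r\<bar> + \<bar>\<alpha> * (\<gamma> * m)\<bar>"
    using abs_triangle_ineq[of "(1 - \<alpha>) * q + \<alpha> * r" "\<alpha> * (\<gamma> * m)"]
      abs_triangle_ineq[of "(1 - \<alpha>) * q" "\<alpha> * r"] by linarith
  also have "\<dots> = \<bar>1 - \<alpha>\<bar> * \<bar>q\<bar> + \<alpha> * \<bar>r\<bar> + \<alpha> * (\<gamma> * \<bar>m\<bar>)"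
    using assms(4,5) by (simp add: abs_mult)
  also have "\<dots> \<le> (1 + \<alpha>) * b + \<alpha> * 1 + \<alpha> * b"
  proof (intro add_mono)
    show "\<bar>1 - \<alpha>\<bar> * \<bar>q\<bar> \<le> (1 + \<alpha>) * b"
      by (rule mult_mono) (use assms in auto)
    show "\<alpha> * \<bar>r\<bar> \<le> \<alpha> * 1" by (rule mult_left_mono) (use assms in auto)
    have "\<gamma> * \<bar>m\<bar> \<le> 1 * b" by (rule mult_mono) (use assms in auto)
    then show "\<alpha> * (\<gamma> * \<bar>m\<bar>) \<le> \<alpha> * b" using assms(4) by (simp add: mult_left_mono)
  qed
  also have "\<dots> = (1 + 2 * \<alpha>) * b + \<alpha>" by (simp add: algebra_simps)
  finally show ?thesis .
qed

lemma max_abs_bound: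
  fixes q :: "'a::finite \<Rightarrow> real"
  assumes "\<And>a. \<bar>q a\<bar> \<le> b" shows "\<bar>Max (range q)\<bar> \<le> b"
  using max_in[of q] assms by metis

lemma supnorm_alt:
  "supnorm (f :: 's::finite \<Rightarrow> 'a::finite \<Rightarrow> real) = Max ((\<lambda>i. \<bar>f (fst i) (snd i)\<bar>) ` UNIV)"
  unfolding supnorm_def by (simp add: split_beta')

theorem theorem2:
  fixes M :: "'w measure"
    and p :: "'s::finite \<Rightarrow> 'a::finite \<Rightarrow> 's \<Rightarrow> real"
    and R :: "'s \<Rightarrow> 'a \<Rightarrow> real"
    and \<gamma> \<alpha> \<epsilon> \<tau> :: real
    and Q0 :: "'s \<Rightarrow> 'a \<Rightarrow> real" and s0 :: 's
    and S :: "nat \<Rightarrow> 'w \<Rightarrow> 's" and A :: "nat \<Rightarrow> 'w \<Rightarrow> 'a"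
    and Q :: "nat \<Rightarrow> 'w \<Rightarrow> ('s \<Rightarrow> 'a \<Rightarrow> real)"
    and \<pi>b :: "'s \<Rightarrow> 'a \<Rightarrow> real" and \<mu> :: "'s \<Rightarrow> real"
    and rb :: nat and \<delta>b :: real and k :: nat
  assumes kernel: "is_kernel p"
    and rew: "\<forall>s a. \<bar>R s a\<bar> \<le> 1"
    and gamma: "0 < \<gamma>" "\<gamma> < 1"
    and alpha_pos: "0 < \<alpha>"
    and eps: "0 < \<epsilon>" "\<epsilon> \<le> 1"
    and tau: "0 < \<tau>" "\<tau> \<le> 1 / (1 - \<gamma>)"
    and Q0_bound: "supnorm Q0 \<le> 1 / (1 - \<gamma>)"
    (* exploration assumption *)
    and pib_pol: "is_policy \<pi>b" and pib_pos: "\<forall>s a. 0 < \<pi>b s a"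
    and irred: "\<forall>s s'. \<exists>n. 0 < kpow (Pstate p \<pi>b) n s s'"
    and mu_dist: "\<forall>s. 0 \<le> \<mu> s" "(\<Sum>s\<in>UNIV. \<mu> s) = 1"
    and mu_stat: "\<forall>s'. (\<Sum>s\<in>UNIV. \<mu> s * Pstate p \<pi>b s s') = \<mu> s'"
    and rb_pos: "0 < rb" and deltab: "0 < \<delta>b"
    and mix: "\<forall>s s'. \<delta>b \<le> kpow (\<lambda>x y. (Pstate p \<pi>b x y + (if x = y then 1 else 0)) / 2) rb s s'"
    (* the algorithm, as a stochastic process on M *)
    and prob: "prob_space M"
    and S_meas: "\<forall>n. S n \<in> M \<rightarrow>\<^sub>M count_space UNIV"
    and A_meas: "\<forall>n. A n \<in> M \<rightarrow>\<^sub>M count_space UNIV"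
    and S_init: "\<forall>w\<in>space M. S 0 w = s0"
    and Q_init: "\<forall>w\<in>space M. Q 0 w = Q0"
    and Q_step: "\<forall>n. \<forall>w\<in>space M.
        Q (Suc n) w = qupdate \<alpha> R \<gamma> (Q n w) (S n w) (A n w) (S (Suc n) w)"
    and A_law: "\<forall>n H a. measure M {w\<in>space M. histS S A n w \<in> H \<and> A n w = a}
        = integral\<^sup>L M (\<lambda>w. indicator {w. histS S A n w \<in> H} w
                             * softpol \<epsilon> \<tau> (Q n w) (S n w) a)"
    and S_law: "\<forall>n H s'. measure M {w\<in>space M. histA S A n w \<in> H \<and> S (Suc n) w = s'}
        = integral\<^sup>L M (\<lambda>w. indicator {w. histA S A n w \<in> H} w
                             * p (S n w) (A n w) s')"
    (* step-size condition alpha < 1/c_1, with lambda = min_{n\<le>k} min_{s,a} pi_n(a|s) *)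
    and alpha_small: "AE w in M. \<alpha> < 1 / ((1/2)
        * (Min ((\<lambda>(n, s, a). softpol \<epsilon> \<tau> (Q n w) s a) ` ({..k} \<times> UNIV \<times> UNIV))) ^ rb
        * Min (range \<mu>) * \<delta>b * (1 - \<gamma>))"
  shows "integral\<^sup>L M (\<lambda>w. (supnorm (\<lambda>s a. Qfun p R \<gamma> (softpol \<epsilon> \<tau> (Q k w)) s a
                                          - Qstar p R \<gamma> s a))\<^sup>2)
    \<le> 12 * \<gamma>\<^sup>2 / (1 - \<gamma>)\<^sup>2
        * integral\<^sup>L M (\<lambda>w. (supnorm (\<lambda>s a. Q k w s a - Qstar p R \<gamma> s a))\<^sup>2)
      + 12 * \<epsilon>\<^sup>2 / (1 - \<gamma>) ^ 4
      + 3 * \<tau>\<^sup>2 * (ln (real CARD('a)))\<^sup>2 / (1 - \<gamma>)\<^sup>2"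
proof -
  interpret prob_space M by (rule prob)
  define K where "K = 1 / (1 - \<gamma>)"
  define B where "B = rec_nat K (\<lambda>_ b. (1 + 2 * \<alpha>) * b + \<alpha>)"
  have B0: "B 0 = K" and BS: "\<And>n. B (Suc n) = (1 + 2 * \<alpha>) * B n + \<alpha>" unfolding B_def by simp_all
  let ?Qs = "Qstar p R \<gamma>"
  have Qs_b: "\<And>s a. \<bar>?Qs s a\<bar> \<le> K" unfolding K_def
    by (rule Qstar_props(2)[OF kernel rew]) (use gamma in auto)
  have qb: "\<forall>w\<in>space M. \<forall>s a. \<bar>Q n w s a\<bar> \<le> B n" for n
  proof (induction n)
    case 0
    show ?case
    proof (intro ballI allI)
      fix w s a assume "w \<in> space M"
      then have "Q 0 w = Q0" using Q_init by blast
      then show "\<bar>Q 0 w s a\<bar> \<le> B 0" using Q0_bound supnorm_ge[of Q0 s a] B0 unfolding K_def by simp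
    qed
  next
    case (Suc n)
    show ?case
    proof (intro ballI allI)
      fix w s a assume w: "w \<in> space M"
      have mb: "\<bar>Max (range (Q n w (S (Suc n) w)))\<bar> \<le> B n"
        by (rule max_abs_bound) (use Suc w in auto)
      show "\<bar>Q (Suc n) w s a\<bar> \<le> B (Suc n)"
      proof (cases "(s, a) = (S n w, A n w)")
        case True
        then have "Q (Suc n) w s a = Q n w s a + \<alpha> * (R s a + \<gamma> * Max (range (Q n w (S (Suc n) w))) - Q n w s a)"
          using Q_step w by (auto simp: qupdate_def)
        moreover have "\<bar>Q n w s a + \<alpha> * (R s a + \<gamma> * Max (range (Q n w (S (Suc n) w))) - Q n w s a)\<bar> \<le> (1 + 2 * \<alpha>) * B n + \<alpha>"
          by (rule upd_bound) (use Suc w rew mb alpha_pos gamma in auto)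
        ultimately show ?thesis using BS by simp
      next
        case False
        then have "Q (Suc n) w s a = Q n w s a" using Q_step w by (auto simp: qupdate_def)
        moreover have "B n \<le> B (Suc n)"
        proof -
          have "0 \<le> B n" using Suc w by (meson abs_ge_zero order_trans)
          then show ?thesis using BS alpha_pos by (simp add: algebra_simps)
        qed
        ultimately show ?thesis using Suc w by (metis order_trans)
      qed
    qed
  qed
  have S_m[measurable]: "S n \<in> measurable M (count_space UNIV)" for n using S_meas by blast
  have A_m[measurable]: "A n \<in> measurable M (count_space UNIV)" for n using A_meas by blast
  have qm: "\<forall>s a. (\<lambda>w. Q n w s a) \<in> borel_measurable M" for n
  proof (induction n)
    case 0
    show ?case
    proof (intro allI)
      fix s a
      show "(\<lambda>w. Q 0 w s a) \<in> borel_measurable M"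
        by (subst measurable_cong[where g="\<lambda>w. Q0 s a"]) (use Q_init in auto)
    qed
  next
    case (Suc n)
    have IH[measurable]: "(\<lambda>w. Q n w s a) \<in> borel_measurable M" for s a using Suc by blast
    have mx[measurable]: "(\<lambda>w. Max (range (Q n w (S (Suc n) w)))) \<in> borel_measurable M"
    proof (rule measurable_compose_countable[where f="\<lambda>s' w. Max (range (Q n w s'))"])
      fix s'
      show "(\<lambda>w. Max (range (Q n w s'))) \<in> borel_measurable M"
        by (rule borel_measurable_Max) auto
    qed (rule S_m)
    show ?case
    proof (intro allI)
      fix s a
      have "(\<lambda>w. if S n w = s \<and> A n w = a
               then Q n w s a + \<alpha> * (R s a + \<gamma> * Max (range (Q n w (S (Suc n) w))) - Q n w s a)
               else Q n w s a) \<in> borel_measurable M"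
        by measurable
      then show "(\<lambda>w. Q (Suc n) w s a) \<in> borel_measurable M"
        by (subst measurable_cong) (use Q_step in \<open>auto simp: qupdate_def\<close>)
    qed
  qed
  define f where "f w = (supnorm (\<lambda>s a. Qfun p R \<gamma> (softpol \<epsilon> \<tau> (Q k w)) s a - ?Qs s a))\<^sup>2" for w
  define g where "g w = (supnorm (\<lambda>s a. Q k w s a - ?Qs s a))\<^sup>2" for w
  define c where "c = 12 * \<gamma>\<^sup>2 / (1 - \<gamma>)\<^sup>2"
  define d where "d = 12 * \<epsilon>\<^sup>2 / (1 - \<gamma>) ^ 4 + 3 * \<tau>\<^sup>2 * (ln (real CARD('a)))\<^sup>2 / (1 - \<gamma>)\<^sup>2"
  have cnn: "0 \<le> c" unfolding c_def by simp
  have dnn: "0 \<le> d" unfolding d_def using gamma by simp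
  have pw: "f w \<le> c * g w + d" for w
    unfolding f_def g_def c_def d_def using pointwise[OF kernel rew gamma eps tau(1), of "Q k w"]
    by (simp add: add.assoc)
  have gm: "g \<in> borel_measurable M"
  proof -
    have qk: "(\<lambda>w. Q k w s a) \<in> borel_measurable M" for s a using qm[of k] by blast
    have mx[measurable]: "(\<lambda>w. Max ((\<lambda>i. \<bar>Q k w (fst i) (snd i) - ?Qs (fst i) (snd i)\<bar>) ` UNIV)) \<in> borel_measurable M"
    proof (rule borel_measurable_Max)
      fix i :: "'s \<times> 'a"
      have "(\<lambda>w. Q k w (fst i) (snd i)) \<in> borel_measurable M" by (rule qk)
      then show "(\<lambda>w. \<bar>Q k w (fst i) (snd i) - ?Qs (fst i) (snd i)\<bar>) \<in> borel_measurable M"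
        by measurable
    qed simp
    have "(\<lambda>w. (Max ((\<lambda>i. \<bar>Q k w (fst i) (snd i) - ?Qs (fst i) (snd i)\<bar>) ` UNIV))\<^sup>2) \<in> borel_measurable M"
      by measurable
    then show ?thesis unfolding g_def supnorm_alt .
  qed
  have gb: "AE w in M. norm (g w) \<le> (B k + K)\<^sup>2"
  proof (rule AE_I2)
    fix w assume w: "w \<in> space M"
    have "supnorm (\<lambda>s a. Q k w s a - ?Qs s a) \<le> B k + K"
    proof (rule supnorm_le)
      fix s a
      show "\<bar>Q k w s a - ?Qs s a\<bar> \<le> B k + K"
      proof -
        have "\<bar>Q k w s a\<bar> \<le> B k" using qb[of k] w by blast
        then show ?thesis using Qs_b[of s a] by (simp add: abs_le_iff)
      qed
    qed
    then have "(supnorm (\<lambda>s a. Q k w s a - ?Qs s a))\<^sup>2 \<le> (B k + K)\<^sup>2"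
      by (rule power_mono) (rule supnorm_nonneg)
    then show "norm (g w) \<le> (B k + K)\<^sup>2" unfolding g_def by simp
  qed
  have gi: "integrable M g" by (rule integrable_const_bound[OF gb gm])
  have gnn: "0 \<le> integral\<^sup>L M g" unfolding g_def by (rule integral_nonneg_AE) simp
  have "integral\<^sup>L M f \<le> c * integral\<^sup>L M g + d"
  proof (cases "integrable M f")
    case True
    have "integral\<^sup>L M f \<le> integral\<^sup>L M (\<lambda>w. c * g w + d)"
      by (rule integral_mono[OF True]) (use gi pw in auto)
    also have "\<dots> = c * integral\<^sup>L M g + d"
      using gi by (simp add: prob_space)
    finally show ?thesis .
  next
    case False
    then have "integral\<^sup>L M f = 0" by (rule not_integrable_integral_eq)
    then show ?thesis using cnn dnn gnn by simp
  qed
  then show ?thesis unfolding f_def g_def c_def d_def by (simp add: add.assoc)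
qed

end
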